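(* If condition $(C_k)$ holds for some $k\in I_n$, then every equilibrium $u$ of the system lying in $\pi_k$ satisfies $\alpha_ku<1$.
   Context: Fix $n\ge 2$ and $I_m=\{1,\dots,m\}$. Consider the Lotka–Volterra system $x_i'=b_ix_i(1-\alpha_ix)$, $i\in I_n$, where $b_i>0$, $\alpha_i=(a_{i1},\dots,a_{in})$ with $a_{ii}>0$ and $a_{ij}\ge 0$, on $\mathbb{R}^n_+$. For $u\le v$ (componentwise), $[u,v]=\{x\in\mathbb{R}^n_+:u\le x\le v\}$. For $J\subset I_n$, $u^J_i=u_i$ for $i\in J$ and $0$ otherwise. $\pi_i=\{x\in\mathbb{R}^n_+:x_i=0\}$, $\gamma_i=\{x\in\mathbb{R}^n_+:\alpha_ix=1\}$. Define $U$ componentwise by: $U_i=a_{ii}^{-1}$ if $a_{ii}\le a_{ji}$ or $a_{ij}=0$ for some $j\ne i$; otherwise $U_i=0$ if $a_{ji}<a_{ii}$ and $a_{jk}\le a_{ik}$ for all $j,k\in I_n\setminus\{i\}$; otherwise $U_i=\max\{\frac{a_{kj}-a_{ij}}{a_{ii}a_{kj}-a_{ij}a_{ki}}: j,k\in I_n\setminus\{i\},\ a_{kj}>a_{ij}\}$. Condition $(C_k)$: either $\alpha_kU^{I_n\setminus\{k\}}<1$, or every $x\in\gamma_k\cap[0,U^{I_n\setminus\{k\}}]$ satisfies $\alpha_jx>1$ for all $j\in I_n\setminus\{k\}$. *)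

theory Defs
  imports "HOL-Analysis.Analysis"
begin

text \<open>Lotka--Volterra system x_i' = b_i x_i (1 - alpha_i x) on the nonnegative orthant
  of R^n, with indices ranging over a finite type 'n (so I_n = UNIV).
  The interaction matrix is A with A$i$j = a_ij; alpha_i = row i of A.\<close>

definition alpha :: "real^'n^'n \<Rightarrow> 'n \<Rightarrow> real^'n \<Rightarrow> real" where
  "alpha A i x = (\<Sum>j\<in>UNIV. A$i$j * x$j)"

definition nonneg :: "real^'n \<Rightarrow> bool" where
  "nonneg x \<longleftrightarrow> (\<forall>i. 0 \<le> x$i)"

definition LV_field :: "real^'n \<Rightarrow> real^'n^'n \<Rightarrow> real^'n \<Rightarrow> real^'n" where
  "LV_field b A x = (\<chi> i. b$i * x$i * (1 - alpha A i x))"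

definition equilibrium :: "real^'n \<Rightarrow> real^'n^'n \<Rightarrow> real^'n \<Rightarrow> bool" where
  "equilibrium b A u \<longleftrightarrow> nonneg u \<and> LV_field b A u = 0"

definition restr :: "'n set \<Rightarrow> real^'n \<Rightarrow> real^'n" where
  "restr J u = (\<chi> i. if i \<in> J then u$i else 0)"

definition box :: "real^'n \<Rightarrow> real^'n \<Rightarrow> (real^'n) set" where
  "box u v = {x. nonneg x \<and> (\<forall>i. u$i \<le> x$i \<and> x$i \<le> v$i)}"

definition gamma :: "real^'n^'n \<Rightarrow> 'n \<Rightarrow> (real^'n) set" where
  "gamma A i = {x. nonneg x \<and> alpha A i x = 1}"

definition pi_face :: "'n \<Rightarrow> (real^'n) set" where
  "pi_face i = {x. nonneg x \<and> x$i = 0}"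

definition Ubound :: "real^'n^'n \<Rightarrow> real^'n" where
  "Ubound A = (\<chi> i.
     if (\<exists>j. j \<noteq> i \<and> (A$i$i \<le> A$j$i \<or> A$i$j = 0)) then 1 / A$i$i
     else if (\<forall>j. j \<noteq> i \<longrightarrow> A$j$i < A$i$i) \<and>
             (\<forall>j k. j \<noteq> i \<longrightarrow> k \<noteq> i \<longrightarrow> A$j$k \<le> A$i$k) then 0
     else Max {(A$k$j - A$i$j) / (A$i$i * A$k$j - A$i$j * A$k$i) | j k.
                 j \<noteq> i \<and> k \<noteq> i \<and> A$k$j > A$i$j})"

definition cond_C :: "real^'n^'n \<Rightarrow> 'n \<Rightarrow> bool" where
  "cond_C A k \<longleftrightarrow>
     alpha A k (restr (UNIV - {k}) (Ubound A)) < 1 \<or>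
     (\<forall>x \<in> gamma A k \<inter> box 0 (restr (UNIV - {k}) (Ubound A)).
        \<forall>j. j \<noteq> k \<longrightarrow> alpha A j x > 1)"

end

theory Submission
  imports Defs
begin

lemma alpha_split:
  "alpha A i x = A$i$l * x$l + (\<Sum>j\<in>UNIV-{l}. A$i$j * x$j)"
  unfolding alpha_def by (rule sum.remove) auto

lemma alpha_scale: "alpha A i (c *\<^sub>R x) = c * alpha A i x"
  unfolding alpha_def by (simp add: sum_distrib_left algebra_simps)

lemma alpha_mono:
  assumes "\<forall>i j. A$i$j \<ge> 0" "\<forall>j. x$j \<le> y$j"
  shows "alpha A i x \<le> alpha A i y"
  unfolding alpha_def using assms by (intro sum_mono mult_left_mono) auto

lemma case3_bound:
  fixes A :: "real^'n^'n"
  assumes nn: "\<forall>i j. A$i$j \<ge> 0" and pos: "\<forall>i. A$i$i > 0"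
    and ik: "i \<noteq> k" and xn: "nonneg x" and xi: "x$i > 0"
    and ak: "alpha A k x = 1" and ai: "alpha A i x \<le> 1"
    and dom: "A$k$i < A$i$i"
  shows "\<exists>j. j \<noteq> i \<and> A$k$j > A$i$j \<and>
            x$i \<le> (A$k$j - A$i$j) / (A$i$i * A$k$j - A$i$j * A$k$i)"
proof (rule ccontr)
  assume H: "\<not> ?thesis"
  define s where "s = x$i"
  define P where "P = 1 - s * A$i$i"
  define Q where "Q = 1 - s * A$k$i"
  define R where "R = UNIV - {i}"
  have sk: "(\<Sum>j\<in>R. A$k$j * x$j) = Q"
    using alpha_split[of A k x i] ak unfolding Q_def s_def R_def by (simp only: mult.commute[of "x$i"])
  have si: "(\<Sum>j\<in>R. A$i$j * x$j) \<le> P"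
    using alpha_split[of A i x i] ai unfolding P_def s_def R_def by (simp only: mult.commute[of "x$i"])
  have xnn: "\<And>j. x$j \<ge> 0" using xn unfolding nonneg_def by auto
  have s0: "(\<Sum>j\<in>R. A$i$j * x$j) \<ge> 0" using nn xnn by (intro sum_nonneg) auto
  have P0: "P \<ge> 0" using si s0 by linarith
  have QP: "Q > P" unfolding P_def Q_def using dom xi s_def
    by (simp add: mult_strict_left_mono algebra_simps)
  have each: "\<And>j. j \<in> R \<Longrightarrow> A$k$j * x$j * P \<le> A$i$j * x$j * Q"
  proof -
    fix j assume "j \<in> R"
    hence ji: "j \<noteq> i" unfolding R_def by auto
    have "A$k$j * P \<le> A$i$j * Q"
    proof (cases "A$k$j > A$i$j")
      case True
      have den: "A$i$i * A$k$j - A$i$j * A$k$i > 0"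
      proof -
        have "A$i$j * A$k$i \<le> A$i$j * A$i$i" using nn dom by (simp add: mult_left_mono)
        also have "\<dots> < A$k$j * A$i$i" using True pos by (simp add: mult_strict_right_mono)
        finally show ?thesis by (simp add: algebra_simps)
      qed
      have "x$i > (A$k$j - A$i$j) / (A$i$i * A$k$j - A$i$j * A$k$i)"
        using H ji True by auto
      hence "x$i * (A$i$i * A$k$j - A$i$j * A$k$i) > A$k$j - A$i$j"
        using den by (simp add: divide_less_eq)
      thus ?thesis unfolding P_def Q_def s_def by (simp add: algebra_simps)
    next
      case False
      hence "A$k$j * P \<le> A$i$j * P" using P0 by (simp add: mult_right_mono)
      also have "\<dots> \<le> A$i$j * Q" using QP nn by (simp add: mult_left_mono)
      finally show ?thesis .
    qed
    thus "A$k$j * x$j * P \<le> A$i$j * x$j * Q" using xnn[of j]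
      by (metis mult.assoc mult.commute mult_left_mono)
  qed
  show False
  proof (cases "\<exists>j\<in>R. A$k$j > A$i$j \<and> x$j > 0")
    case True
    then obtain j where j: "j \<in> R" "A$k$j > A$i$j" "x$j > 0" by auto
    have den: "A$i$i * A$k$j - A$i$j * A$k$i > 0"
    proof -
      have "A$i$j * A$k$i \<le> A$i$j * A$i$i" using nn dom by (simp add: mult_left_mono)
      also have "\<dots> < A$k$j * A$i$i" using j pos by (simp add: mult_strict_right_mono)
      finally show ?thesis by (simp add: algebra_simps)
    qed
    have ji: "j \<noteq> i" using j unfolding R_def by auto
    have "x$i > (A$k$j - A$i$j) / (A$i$i * A$k$j - A$i$j * A$k$i)"
      using H ji j by auto
    hence "x$i * (A$i$i * A$k$j - A$i$j * A$k$i) > A$k$j - A$i$j"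
      using den by (simp add: divide_less_eq)
    hence h: "A$k$j * P < A$i$j * Q" unfolding P_def Q_def s_def by (simp add: algebra_simps)
    have strict: "A$k$j * x$j * P < A$i$j * x$j * Q"
      using mult_strict_right_mono[OF h j(3)] by (simp add: mult.commute mult.left_commute)
    have "Q * P = (\<Sum>j\<in>R. A$k$j * x$j * P)" by (simp only: sum_distrib_right[symmetric] sk)
    also have "\<dots> < (\<Sum>j\<in>R. A$i$j * x$j * Q)"
      by (rule sum_strict_mono_ex1) (simp, use each in blast, use strict j(1) in blast)
    also have "\<dots> = (\<Sum>j\<in>R. A$i$j * x$j) * Q" by (simp add: sum_distrib_right)
    also have "\<dots> \<le> P * Q" using si QP P0 by (simp add: mult_right_mono)
    finally show False by simp
  next
    case False
    have "Q = (\<Sum>j\<in>R. A$k$j * x$j)" using sk by simp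
    also have "\<dots> \<le> (\<Sum>j\<in>R. A$i$j * x$j)"
    proof (rule sum_mono)
      fix j assume "j \<in> R"
      show "A$k$j * x$j \<le> A$i$j * x$j"
        using False \<open>j \<in> R\<close> xnn[of j]
        by (cases "x$j > 0") (auto simp: mult_right_mono)
    qed
    also have "\<dots> \<le> P" by (rule si)
    finally show False using QP by simp
  qed
qed

lemma three_cases:
  "(P \<Longrightarrow> thesis) \<Longrightarrow> (\<not> P \<Longrightarrow> Q \<Longrightarrow> thesis) \<Longrightarrow> (\<not> P \<Longrightarrow> \<not> Q \<Longrightarrow> thesis) \<Longrightarrow> thesis"
  by blast

lemma U_bound:
  fixes A :: "real^'n^'n"
  assumes nn: "\<forall>i j. A$i$j \<ge> 0" and pos: "\<forall>i. A$i$i > 0"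
    and ik: "i \<noteq> k" and xn: "nonneg x"
    and ak: "alpha A k x = 1" and ai: "x$i > 0 \<Longrightarrow> alpha A i x \<le> 1"
  shows "x$i \<le> Ubound A $ i"
proof -
  have xnn: "\<And>j. x$j \<ge> 0" using xn unfolding nonneg_def by auto
  consider (c1) "\<exists>j. j \<noteq> i \<and> (A$i$i \<le> A$j$i \<or> A$i$j = 0)"
    | (c2) "\<not> (\<exists>j. j \<noteq> i \<and> (A$i$i \<le> A$j$i \<or> A$i$j = 0))"
           "(\<forall>j. j \<noteq> i \<longrightarrow> A$j$i < A$i$i) \<and>
             (\<forall>j k. j \<noteq> i \<longrightarrow> k \<noteq> i \<longrightarrow> A$j$k \<le> A$i$k)"
    | (c3) "\<not> (\<exists>j. j \<noteq> i \<and> (A$i$i \<le> A$j$i \<or> A$i$j = 0))"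
           "\<not> ((\<forall>j. j \<noteq> i \<longrightarrow> A$j$i < A$i$i) \<and>
             (\<forall>j k. j \<noteq> i \<longrightarrow> k \<noteq> i \<longrightarrow> A$j$k \<le> A$i$k))"
    by (rule three_cases)
  thus ?thesis
  proof cases
    case c1
    have U: "Ubound A $ i = 1 / A$i$i" unfolding Ubound_def vec_lambda_beta if_P[OF c1] by (rule refl)
    show ?thesis
    proof (cases "x$i > 0")
      case True
      have "(\<Sum>j\<in>UNIV-{i}. A$i$j * x$j) \<ge> 0" using nn xnn by (intro sum_nonneg) auto
      hence le1: "A$i$i * x$i \<le> 1" using alpha_split[of A i x i] ai True by simp
      have p: "A$i$i > 0" using pos by blast
      have "(A$i$i * x$i) / A$i$i \<le> 1 / A$i$i" using divide_right_mono[OF le1, of "A$i$i"] p by simp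
      thus ?thesis using U p by simp
    next
      case False
      have "A$i$i > 0" using pos by blast
      thus ?thesis using False U xnn[of i] by simp
    qed
  next
    case c2
    have U: "Ubound A $ i = 0" unfolding Ubound_def vec_lambda_beta if_not_P[OF c2(1)] if_P[OF c2(2)] by (rule refl)
    show ?thesis
    proof (rule ccontr)
      assume "\<not> ?thesis"
      hence xi: "x$i > 0" using U by simp
      have "(\<Sum>j\<in>UNIV-{i}. A$k$j * x$j) \<le> (\<Sum>j\<in>UNIV-{i}. A$i$j * x$j)"
        using c2 ik xnn by (intro sum_mono mult_right_mono) auto
      moreover have "A$k$i * x$i < A$i$i * x$i"
      proof -
        have "A$k$i < A$i$i" using c2(2) ik[symmetric] by simp
        thus ?thesis using mult_strict_right_mono xi by blast
      qed
      ultimately have "alpha A k x < alpha A i x"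
        using alpha_split[of A k x i] alpha_split[of A i x i] by simp
      thus False using ak ai xi by simp
    qed
  next
    case c3
    define S where "S = {(A$k$j - A$i$j) / (A$i$i * A$k$j - A$i$j * A$k$i) | j k.
                 j \<noteq> i \<and> k \<noteq> i \<and> A$k$j > A$i$j}"
    have U: "Ubound A $ i = Max S" unfolding Ubound_def vec_lambda_beta if_not_P[OF c3(1)] if_not_P[OF c3(2)] S_def by (rule refl)
    have fin: "finite S"
    proof -
      have "S \<subseteq> (\<lambda>(j,k). (A$k$j - A$i$j) / (A$i$i * A$k$j - A$i$j * A$k$i)) ` UNIV"
      proof
        fix z assume "z \<in> S"
        then obtain j k where "z = (A$k$j - A$i$j) / (A$i$i * A$k$j - A$i$j * A$k$i)"
          unfolding S_def by blast
        thus "z \<in> (\<lambda>(j,k). (A$k$j - A$i$j) / (A$i$i * A$k$j - A$i$j * A$k$i)) ` UNIV"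
          by (intro image_eqI[of _ _ "(j,k)"]) simp_all
      qed
      thus ?thesis by (rule finite_subset) simp
    qed
    have dom: "\<And>j. j \<noteq> i \<Longrightarrow> A$j$i < A$i$i"
    proof -
      fix j assume "j \<noteq> i"
      hence "\<not> A$i$i \<le> A$j$i" using c3(1) by blast
      thus "A$j$i < A$i$i" by simp
    qed
    obtain j l where jl: "j \<noteq> i" "l \<noteq> i" "A$j$l > A$i$l"
    proof -
      have "\<not> (\<forall>j k. j \<noteq> i \<longrightarrow> k \<noteq> i \<longrightarrow> A$j$k \<le> A$i$k)"
        using c3(2) dom by blast
      then obtain j l where "j \<noteq> i" "l \<noteq> i" "\<not> A$j$l \<le> A$i$l" by blast
      thus ?thesis using that by simp
    qed
    have den: "A$i$i * A$j$l - A$i$l * A$j$i > 0"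
    proof -
      have "A$i$l * A$j$i \<le> A$i$l * A$i$i" using nn dom[OF jl(1)] by (simp add: mult_left_mono)
      also have "\<dots> < A$j$l * A$i$i" using jl pos by (simp add: mult_strict_right_mono)
      finally show ?thesis by (simp add: algebra_simps)
    qed
    have mem: "(A$j$l - A$i$l) / (A$i$i * A$j$l - A$i$l * A$j$i) \<in> S"
      unfolding S_def by (intro CollectI exI[of _ l] exI[of _ j]) (use jl in simp)
    have "(A$j$l - A$i$l) / (A$i$i * A$j$l - A$i$l * A$j$i) > 0" using jl den by simp
    hence Mpos: "Max S > 0" using Max_ge[OF fin mem] by linarith
    show ?thesis
    proof (cases "x$i > 0")
      case False thus ?thesis using Mpos U xnn[of i] by simp
    next
      case True
      obtain m where m: "m \<noteq> i" "A$k$m > A$i$m"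
        "x$i \<le> (A$k$m - A$i$m) / (A$i$i * A$k$m - A$i$m * A$k$i)"
        using case3_bound[OF nn pos ik xn True ak ai[OF True] dom[OF ik[symmetric]]] by blast
      have "(A$k$m - A$i$m) / (A$i$i * A$k$m - A$i$m * A$k$i) \<in> S"
        unfolding S_def by (intro CollectI exI[of _ m] exI[of _ k]) (use m ik in simp)
      thus ?thesis using Max_ge[OF fin] m(3) U by (metis order_trans)
    qed
  qed
qed

theorem mainTheorem7:
  fixes b :: "real^'n" and A :: "real^'n^'n" and k :: 'n and u :: "real^'n"
  assumes "CARD('n) \<ge> 2"
    and "\<forall>i. b$i > 0"
    and "\<forall>i. A$i$i > 0"
    and "\<forall>i j. A$i$j \<ge> 0"
    and "cond_C A k"
    and "equilibrium b A u"
    and "u \<in> pi_face k"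
  shows "alpha A k u < 1"
proof (rule ccontr)
  assume "\<not> ?thesis"
  hence m1: "alpha A k u \<ge> 1" by simp
  define m where "m = alpha A k u"
  define x where "x = (1/m) *\<^sub>R u"
  have unn: "\<And>j. u$j \<ge> 0" using assms(6) unfolding equilibrium_def nonneg_def by auto
  have uk: "u$k = 0" using assms(7) unfolding pi_face_def by auto
  have eq: "\<And>i. u$i = 0 \<or> alpha A i u = 1"
  proof -
    fix i
    have "LV_field b A u $ i = 0" using assms(6) unfolding equilibrium_def by simp
    hence "b$i * u$i * (1 - alpha A i u) = 0" unfolding LV_field_def by simp
    moreover have "b$i > 0" using assms(2) by blast
    ultimately show "u$i = 0 \<or> alpha A i u = 1" by simp
  qed
  have m0: "m > 0" using m1 m_def by simp
  have xnn: "nonneg x" unfolding nonneg_def x_def using unn m0 by simp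
  have ak: "alpha A k x = 1" unfolding x_def alpha_scale m_def using m0 m_def by simp
  have xk: "x$k = 0" unfolding x_def using uk by simp
  have ai: "\<And>i. x$i > 0 \<Longrightarrow> alpha A i x = 1/m"
  proof -
    fix i assume "x$i > 0"
    hence "u$i \<noteq> 0" unfolding x_def by auto
    hence "alpha A i u = 1" using eq by auto
    thus "alpha A i x = 1/m" unfolding x_def alpha_scale by simp
  qed
  have aile: "\<And>i. x$i > 0 \<Longrightarrow> alpha A i x \<le> 1" using ai m1 m_def by simp
  define V where "V = restr (UNIV - {k}) (Ubound A)"
  have xV: "\<And>i. x$i \<le> V$i"
  proof -
    fix i show "x$i \<le> V$i"
    proof (cases "i = k")
      case True thus ?thesis using xk unfolding V_def restr_def by simp
    next
      case False
      thus ?thesis using U_bound[OF assms(4) assms(3) False xnn ak aile]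
        unfolding V_def restr_def by simp
    qed
  qed
  obtain j where j: "x$j > 0"
  proof (rule ccontr)
    assume "\<not> thesis"
    hence "\<forall>j. \<not> x$j > 0" using that by blast
    hence "\<forall>j. x$j = 0" using xnn unfolding nonneg_def by (metis antisym not_le)
    hence "alpha A k x = 0" unfolding alpha_def by simp
    thus False using ak by simp
  qed
  have jk: "j \<noteq> k" using j xk by auto
  from assms(5) show False unfolding cond_C_def V_def[symmetric]
  proof
    assume "alpha A k V < 1"
    moreover have "alpha A k x \<le> alpha A k V" using alpha_mono assms(4) xV by blast
    ultimately show False using ak by simp
  next
    assume H: "\<forall>x\<in>gamma A k \<inter> box 0 V. \<forall>j. j \<noteq> k \<longrightarrow> 1 < alpha A j x"
    have "x \<in> gamma A k \<inter> box 0 V"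
      unfolding gamma_def box_def using xnn ak xV xnn unfolding nonneg_def by auto
    hence "1 < alpha A j x" using H jk by blast
    thus False using aile[OF j] by simp
  qed
qed

end
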